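(* For $n\ge 4$, the network space $\mathfrak S_n$ is a connected simplicial complex of dimension $n(n-3)/2-1$, whose $k$-simplices correspond bijectively to the split systems consisting of $k+1$ nontrivial splits that are circular with respect to some circular ordering of $X$ (equivalently, to labeled $n$-gons with $k+1$ diagonals, two labeled polygons being identified when they represent the same split system).
   Context: $X$ is a set of $n\ge4$ labels. A split of $X$ is an unordered partition $\{A,B\}$ of $X$ into two nonempty sets; it is trivial if one part has one element. A circular ordering of $X$ is a cyclic arrangement $\pi=(x_1,\dots,x_n)$ up to rotation and reflection; a split is circular w.r.t. $\pi$ if it has the form $\{\{x_{i+1},\dots,x_j\},X\setminus\{x_{i+1},\dots,x_j\}\}$ (indices mod $n$); it then corresponds to a diagonal of a regular $n$-gon whose edges are labeled cyclically by $\pi$. Let $\delta=2^{n-1}-n-1$ be the number of nontrivial splits and give $\mathbb R^\delta$ coordinates indexed by nontrivial splits. For each circular ordering $\pi$ let $O_\pi\subset\mathbb R^\delta$ be the set of nonnegative vectors whose support consists of splits circular w.r.t. $\pi$. The space of circular split networks is $\mathrm{CSN}_n=\bigcup_\pi O_\pi$, and the network space is $\mathfrak S_n=\{x\in \mathrm{CSN}_n:\sum x_s=1\}=\bigcup_\pi \Delta_\pi$ where $\Delta_\pi=O_\pi\cap\{\sum x_s=1\}$ is a simplex (a chamber); faces of chambers are the sets of points whose support lies in a given subsystem. *)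

theory Defs
  imports "HOL-Analysis.Analysis"
begin

text \<open>The label set X is the universe of a finite type 'a (so n = CARD('a)).
  A split is represented as the unordered pair {A, X - A} of its parts.\<close>

definition is_split :: "'a set \<Rightarrow> 'a set set \<Rightarrow> bool" where
  "is_split X s \<longleftrightarrow> (\<exists>A. A \<noteq> {} \<and> A \<subset> X \<and> s = {A, X - A})"

definition trivial_split :: "'a set \<Rightarrow> 'a set set \<Rightarrow> bool" where
  "trivial_split X s \<longleftrightarrow> is_split X s \<and> (\<exists>A\<in>s. card A = 1)"

definition nontrivial_split :: "'a set \<Rightarrow> 'a set set \<Rightarrow> bool" where
  "nontrivial_split X s \<longleftrightarrow> is_split X s \<and> \<not> trivial_split X s"

text \<open>A circular ordering (x_1,...,x_n) of X is represented by a list enumerating X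
  without repetition; rotations/reflections give the same circular splits.\<close>

definition circular_ordering :: "'a set \<Rightarrow> 'a list \<Rightarrow> bool" where
  "circular_ordering X xs \<longleftrightarrow> distinct xs \<and> set xs = X"

definition circular_wrt :: "'a set \<Rightarrow> 'a list \<Rightarrow> 'a set set \<Rightarrow> bool" where
  "circular_wrt X xs s \<longleftrightarrow> is_split X s \<and>
     (\<exists>i m. let A = {xs ! ((i + t) mod length xs) | t. t < m} in s = {A, X - A})"

text \<open>Coordinates are indexed by splits; vectors of the ambient space R^delta are
  those supported on nontrivial splits of X = UNIV.\<close>

definition chamber_cone :: "'a list \<Rightarrow> (real ^ ('a::finite set set)) set" where
  "chamber_cone xs = {x. (\<forall>s. 0 \<le> x $ s) \<and>
      (\<forall>s. x $ s \<noteq> 0 \<longrightarrow> nontrivial_split UNIV s \<and> circular_wrt UNIV xs s)}"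

definition CSN :: "(real ^ ('a::finite set set)) set" where
  "CSN = (\<Union>xs\<in>{xs. circular_ordering UNIV xs}. chamber_cone xs)"

definition network_space :: "(real ^ ('a::finite set set)) set" where
  "network_space = {x \<in> CSN. (\<Sum>s\<in>{s. nontrivial_split UNIV s}. x $ s) = 1}"

text \<open>Split systems of nontrivial splits circular w.r.t. some circular ordering
  (including the empty system, which gives the empty face).\<close>

definition circular_split_system :: "('a::finite) set set set \<Rightarrow> bool" where
  "circular_split_system S \<longleftrightarrow> (\<forall>s\<in>S. nontrivial_split UNIV s) \<and>
     (\<exists>xs. circular_ordering UNIV xs \<and> (\<forall>s\<in>S. circular_wrt UNIV xs s))"

definition split_cell :: "('a::finite) set set set \<Rightarrow> (real ^ ('a set set)) set" where
  "split_cell S = convex hull ((\<lambda>s. axis s 1) ` S)"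

definition network_complex :: "(real ^ ('a::finite set set)) set set" where
  "network_complex = split_cell ` {S. circular_split_system S}"

end

theory Submission
  imports Defs
begin


abbreviation ee :: "'a::finite \<Rightarrow> real^'a" where "ee s \<equiv> axis s 1"

lemma ee_inj: "inj ee"
  by (auto intro!: injI simp: axis_eq_axis)

lemma sum_ee_nth: "finite S \<Longrightarrow> (\<Sum>s\<in>S. f s *\<^sub>R ee s) $ i = (if i \<in> S then f i else 0)"
  by (simp add: sum_component axis_def if_distrib[of "\<lambda>z. _ * z"] sum.delta' cong: if_cong)

lemma hull_char:
  fixes S :: "'a::finite set"
  shows "convex hull (ee ` S) = {x. (\<forall>i. 0 \<le> x$i) \<and> (\<forall>i. x$i \<noteq> 0 \<longrightarrow> i \<in> S) \<and> sum (\<lambda>i. x$i) S = 1}"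
proof -
  have fin: "finite (ee ` S)" by simp
  have inj: "inj_on ee S" using ee_inj by (metis inj_on_subset subset_UNIV)
  show ?thesis
  proof (intro set_eqI iffI)
    fix y :: "real^'a" assume "y \<in> convex hull (ee ` S)"
    then obtain u where u: "\<forall>x\<in>ee ` S. 0 \<le> u x" "sum u (ee ` S) = 1" "(\<Sum>x\<in>ee ` S. u x *\<^sub>R x) = y"
      unfolding convex_hull_finite[OF fin] by blast
    have y: "y = (\<Sum>s\<in>S. u (ee s) *\<^sub>R ee s)"
      using u(3) by (simp add: sum.reindex[OF inj])
    have yi: "y $ i = (if i \<in> S then u (ee i) else 0)" for i
      unfolding y by (rule sum_ee_nth) simp
    have "sum u (ee ` S) = (\<Sum>s\<in>S. u (ee s))" by (simp add: sum.reindex[OF inj])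
    then show "y \<in> {x. (\<forall>i. 0 \<le> x$i) \<and> (\<forall>i. x$i \<noteq> 0 \<longrightarrow> i \<in> S) \<and> sum (\<lambda>i. x$i) S = 1}"
      using u(1,2) by (auto simp: yi)
  next
    fix x :: "real^'a" assume x: "x \<in> {x. (\<forall>i. 0 \<le> x$i) \<and> (\<forall>i. x$i \<noteq> 0 \<longrightarrow> i \<in> S) \<and> sum (\<lambda>i. x$i) S = 1}"
    define u :: "real^'a \<Rightarrow> real" where "u v = x $ (inv ee v)" for v
    have ui: "u (ee s) = x $ s" for s by (simp add: u_def inv_f_f[OF ee_inj])
    have "x = (\<Sum>s\<in>S. u (ee s) *\<^sub>R ee s)"
      unfolding vec_eq_iff sum_ee_nth[OF finite] using x by (auto simp: ui)
    then have "(\<Sum>v\<in>ee ` S. u v *\<^sub>R v) = x" by (simp add: sum.reindex[OF inj])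
    moreover have "sum u (ee ` S) = 1" using x by (simp add: sum.reindex[OF inj] ui)
    moreover have "\<forall>v\<in>ee ` S. 0 \<le> u v" using x by (auto simp: ui)
    ultimately show "x \<in> convex hull (ee ` S)"
      unfolding convex_hull_finite[OF fin] by blast
  qed
qed

lemma ee_indep: "\<not> affine_dependent (ee ` (S::'a::finite set))"
proof
  assume "affine_dependent (ee ` S)"
  then have "dependent (ee ` S)" by (rule affine_dependent_imp_dependent)
  moreover have "ee ` S \<subseteq> Basis" by (auto simp: Basis_vec_def)
  ultimately show False using independent_Basis dependent_mono by blast
qed


lemma mod_2n: "(x::nat) < 2*n \<Longrightarrow> x mod n = (if x < n then x else x - n)"
  by (simp add: mod_if[of x n] le_mod_geq)

lemma Q_char:
  fixes i m n :: nat
  assumes "i < n" "m \<le> n"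
  shows "{(i+t) mod n | t. t<m} = {p. p<n \<and> (if i+m \<le> n then i \<le> p \<and> p < i+m else (i \<le> p \<or> p < i+m-n))}"
proof (intro set_eqI iffI)
  fix p assume "p \<in> {(i+t) mod n | t. t<m}"
  then obtain t where t: "t < m" "p = (i+t) mod n" by blast
  then have "p = (if i+t < n then i+t else i+t-n)" using assms by (simp add: mod_2n)
  then show "p \<in> {p. p<n \<and> (if i+m \<le> n then i \<le> p \<and> p < i+m else (i \<le> p \<or> p < i+m-n))}"
    using t assms by auto
next
  fix p assume p: "p \<in> {p. p<n \<and> (if i+m \<le> n then i \<le> p \<and> p < i+m else (i \<le> p \<or> p < i+m-n))}"
  show "p \<in> {(i+t) mod n | t. t<m}"
  proof (cases "i \<le> p")
    case True
    then have "p = (i + (p-i)) mod n" "p - i < m" using p by (auto split: if_splits)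
    then show ?thesis by blast
  next
    case False
    then have "p = (i + (p+n-i)) mod n" "p + n - i < m" using p assms
      by (auto simp: mod_2n split: if_splits)
    then show ?thesis by blast
  qed
qed


lemma card_J: "2 * card {(j,k). 0<j \<and> j<k \<and> k<(n::nat)} = (n-1)*(n-2)"
proof (induction n)
  case 0 then show ?case by simp
next
  case (Suc n)
  have eq: "{(j,k). 0<j \<and> j<k \<and> k<Suc n} = {(j,k). 0<j \<and> j<k \<and> k<n} \<union> (\<lambda>j. (j,n)) ` {0<..<n}"
    by auto
  have fin: "finite {(j,k). 0<j \<and> j<k \<and> k<(n::nat)}"
    by (rule finite_subset[of _ "{..<n} \<times> {..<n}"]) auto
  have "card {(j,k). 0<j \<and> j<k \<and> k<Suc n} = card {(j,k). 0<j \<and> j<k \<and> k<n} + card ((\<lambda>j. (j,n)) ` {0<..<n})"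
    unfolding eq by (rule card_Un_disjoint[OF fin]) auto
  also have "card ((\<lambda>j. (j,n)) ` {0<..<n}) = n - 1" by (subst card_image) (auto intro: inj_onI)
  finally show ?case using Suc.IH by (cases n) (auto simp: algebra_simps)
qed


lemma Q_interval:
  fixes i m n :: nat
  assumes "i < n" "0 < m" "m < n"
  shows "\<exists>j k. 0<j \<and> j\<le>k \<and> k<n \<and> ({(i+t) mod n | t. t<m} = {j..k} \<or> {..<n} - {(i+t) mod n | t. t<m} = {j..k})"
proof -
  have QC: "{(i+t) mod n | t. t<m} = {p. p<n \<and> (if i+m \<le> n then i \<le> p \<and> p < i+m else (i \<le> p \<or> p < i+m-n))}"
    by (rule Q_char[OF assms(1) less_imp_le[OF assms(3)]])
  show ?thesis
  proof (cases "i + m \<le> n")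
    case True
    have Q: "{(i+t) mod n | t. t<m} = {i..<i+m}" unfolding QC using True by auto
    show ?thesis
    proof (cases "i = 0")
      case True
      then have "{..<n} - {(i+t) mod n | t. t<m} = {m..n-1}" unfolding Q using assms by (auto simp: set_eq_iff)
      then show ?thesis using assms by (intro exI[of _ m] exI[of _ "n-1"]) auto
    next
      case False
      then have "{(i+t) mod n | t. t<m} = {i..i+m-1}" unfolding Q using assms by (auto simp: set_eq_iff)
      then show ?thesis using assms False True by (intro exI[of _ i] exI[of _ "i+m-1"]) auto
    qed
  next
    case False
    have "{..<n} - {(i+t) mod n | t. t<m} = {i+m-n..i-1}" unfolding QC using assms False by (auto simp: set_eq_iff)
    then show ?thesis using assms False by (intro exI[of _ "i+m-n"] exI[of _ "i-1"]) auto
  qed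
qed

lemma Q_full:
  fixes i m n :: nat
  assumes "0 < n" "n \<le> m"
  shows "{(i+t) mod n | t. t<m} = {..<n}"
proof (intro set_eqI iffI)
  fix p assume "p \<in> {(i+t) mod n | t. t<m}" then show "p \<in> {..<n}" using assms by auto
next
  fix p assume p: "p \<in> {..<n}"
  have "p \<in> {(i mod n+t) mod n | t. t<n}"
    unfolding Q_char[OF mod_less_divisor[OF assms(1)] order_refl] using p by auto
  then obtain t where "t < n" "p = (i mod n + t) mod n" by blast
  then have "t < m" "p = (i + t) mod n" using assms by (auto simp: mod_add_left_eq)
  then show "p \<in> {(i+t) mod n | t. t<m}" by blast
qed


definition NC :: "'a::finite list \<Rightarrow> 'a set set set" where
  "NC xs = {s. nontrivial_split UNIV s \<and> circular_wrt UNIV xs s}"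

definition Fm :: "'a list \<Rightarrow> nat \<times> nat \<Rightarrow> 'a set set" where
  "Fm xs jk = {(!) xs ` {fst jk..snd jk}, UNIV - (!) xs ` {fst jk..snd jk}}"

definition Idx :: "nat \<Rightarrow> (nat \<times> nat) set" where
  "Idx n = {(j,k). 0<j \<and> j<k \<and> k<n} - {(1,n-1)}"

lemma split_parts:
  assumes "is_split UNIV s" "s = {A, UNIV - A}"
  shows "A \<noteq> {} \<and> A \<noteq> UNIV"
proof -
  obtain B where B: "B \<noteq> {}" "B \<subset> UNIV" "s = {B, UNIV - B}" using assms(1) unfolding is_split_def by blast
  have "A \<in> s" using assms(2) by auto
  then show ?thesis using B by auto
qed

lemma nontriv_parts:
  fixes A :: "'a::finite set"
  assumes "nontrivial_split UNIV s" "s = {A, UNIV - A}"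
  shows "2 \<le> card A \<and> 2 \<le> card (UNIV - A)"
proof -
  have sp: "is_split UNIV s" and nt: "\<not> trivial_split UNIV s" using assms(1) unfolding nontrivial_split_def by auto
  have ne: "A \<noteq> {}" "A \<noteq> UNIV" using split_parts[OF sp assms(2)] by auto
  have "card A \<noteq> 1" "card (UNIV - A) \<noteq> 1" using nt sp assms(2) unfolding trivial_split_def by auto
  moreover have "card A \<noteq> 0" "card (UNIV - A) \<noteq> 0" using ne by (auto simp add: card_eq_0_iff)
  ultimately show ?thesis by linarith
qed

lemma nontriv_intro:
  fixes A :: "'a::finite set"
  assumes "2 \<le> card A" "2 \<le> card (UNIV - A)"
  shows "nontrivial_split UNIV {A, UNIV - A}"
proof -
  have "A \<noteq> {}" "UNIV - A \<noteq> {}" using assms by (metis card.empty not_numeral_le_zero)+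
  then have "is_split UNIV {A, UNIV - A}" unfolding is_split_def by blast
  moreover have "\<not> trivial_split UNIV {A, UNIV - A}" unfolding trivial_split_def using assms by auto
  ultimately show ?thesis unfolding nontrivial_split_def by auto
qed

context
  fixes xs :: "'a::finite list"
  assumes co: "circular_ordering UNIV xs"
begin

lemma len: "length xs = CARD('a)"
  using co unfolding circular_ordering_def by (metis distinct_card)

lemma img_all: "(!) xs ` {..<length xs} = UNIV"
  using co unfolding circular_ordering_def by (auto simp: set_conv_nth)

lemma injn: "I \<subseteq> {..<length xs} \<Longrightarrow> inj_on ((!) xs) I"
  using co unfolding circular_ordering_def by (intro inj_on_nth) auto

lemma card_img: "I \<subseteq> {..<length xs} \<Longrightarrow> card ((!) xs ` I) = card I"
  by (rule card_image[OF injn])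

lemma compl_img: "I \<subseteq> {..<length xs} \<Longrightarrow> UNIV - (!) xs ` I = (!) xs ` ({..<length xs} - I)"
proof -
  assume "I \<subseteq> {..<length xs}"
  then have "(!) xs ` ({..<length xs} - I) = (!) xs ` {..<length xs} - (!) xs ` I"
    by (intro inj_on_image_set_diff[OF injn]) auto
  then show ?thesis using img_all by simp
qed

lemma card_compl: "card (UNIV - (B::'a set)) = length xs - card B"
  by (simp add: card_Diff_subset len)

lemma Fm_in:
  assumes "jk \<in> Idx (length xs)"
  shows "Fm xs jk \<in> NC xs"
proof -
  obtain j k where jk: "jk = (j,k)" "0<j" "j<k" "k<length xs" "(j,k) \<noteq> (1, length xs - 1)"
    using assms unfolding Idx_def by auto
  define B where "B = (!) xs ` {j..k}"
  have FB: "Fm xs jk = {B, UNIV - B}" by (simp add: Fm_def B_def jk(1))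
  have cB: "card B = k + 1 - j" unfolding B_def using jk by (subst card_img) auto
  have c1: "2 \<le> card B" using cB jk by auto
  have c2: "2 \<le> card (UNIV - B)" unfolding card_compl cB using jk by auto
  have nt: "nontrivial_split UNIV (Fm xs jk)" unfolding FB by (rule nontriv_intro[OF c1 c2])
  have "{xs ! ((j + t) mod length xs) |t. t < k+1-j} = B"
  proof (intro set_eqI iffI)
    fix x assume "x \<in> {xs ! ((j + t) mod length xs) |t. t < k+1-j}"
    then obtain t where t: "t < k+1-j" "x = xs ! ((j + t) mod length xs)" by blast
    have "(j + t) mod length xs = j + t" using t jk by simp
    then have "x = xs ! (j+t)" "j+t \<in> {j..k}" using t jk by auto
    then show "x \<in> B" unfolding B_def by blast
  next
    fix x assume "x \<in> B"
    then obtain p where p: "j \<le> p" "p \<le> k" "x = xs ! p" unfolding B_def by auto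
    have "(j + (p-j)) mod length xs = p" using p jk by simp
    then have "x = xs ! ((j + (p-j)) mod length xs)" "p - j < k+1-j" using p by auto
    then show "x \<in> {xs ! ((j + t) mod length xs) |t. t < k+1-j}" by blast
  qed
  then have L: "let A = {xs ! ((j + t) mod length xs) |t. t < k+1-j} in Fm xs jk = {A, UNIV - A}"
    unfolding FB Let_def by simp
  have "circular_wrt UNIV xs (Fm xs jk)"
    unfolding circular_wrt_def
    apply (rule conjI)
    using nt unfolding nontrivial_split_def apply blast
    apply (rule exI[of _ j], rule exI[of _ "k+1-j"])
    by (rule L)
  then show ?thesis using nt unfolding NC_def by auto
qed

lemma Fm_inj: "inj_on (Fm xs) (Idx (length xs))"
proof (rule inj_onI)
  fix a b assume a: "a \<in> Idx (length xs)" and b: "b \<in> Idx (length xs)" and eq: "Fm xs a = Fm xs b"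
  define A where "A = (!) xs ` {fst a..snd a}"
  define B where "B = (!) xs ` {fst b..snd b}"
  have l0: "0 < length xs" using a unfolding Idx_def by auto
  have n0: "xs ! 0 \<notin> A" unfolding A_def using a l0 unfolding Idx_def
    by (subst inj_on_image_mem_iff[OF injn[OF order_refl]]) auto
  have n0': "xs ! 0 \<notin> B" unfolding B_def using b l0 unfolding Idx_def
    by (subst inj_on_image_mem_iff[OF injn[OF order_refl]]) auto
  have "{A, UNIV - A} = {B, UNIV - B}" using eq unfolding Fm_def A_def B_def by simp
  then have "A = B \<or> A = UNIV - B" by (metis doubleton_eq_iff)
  then have "A = B" using n0 n0' by auto
  moreover have "{fst a..snd a} \<subseteq> {..<length xs}" "{fst b..snd b} \<subseteq> {..<length xs}"
    using a b unfolding Idx_def by auto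
  ultimately have "{fst a..snd a} = {fst b..snd b}" unfolding A_def B_def
    using inj_on_image_eq_iff[OF injn[OF order_refl]] by metis
  then show "a = b" using a b unfolding Idx_def by (auto simp: prod_eq_iff)
qed

lemma NC_sub: "NC xs \<subseteq> Fm xs ` Idx (length xs)"
proof
  fix s assume s: "s \<in> NC xs"
  let ?n = "length xs"
  have n0: "0 < ?n" using len by simp
  have nt: "nontrivial_split UNIV s" and sp: "is_split UNIV s" and cw: "circular_wrt UNIV xs s"
    using s unfolding NC_def nontrivial_split_def by auto
  obtain i m where im: "s = {(!) xs ` {(i+t) mod ?n | t. t<m}, UNIV - (!) xs ` {(i+t) mod ?n | t. t<m}}"
  proof -
    from cw obtain i m where L: "let A = {xs ! ((i + t) mod ?n) | t. t < m} in s = {A, UNIV - A}"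
      unfolding circular_wrt_def by blast
    have eq: "{xs ! ((i + t) mod ?n) | t. t < m} = (!) xs ` {(i+t) mod ?n | t. t<m}" by blast
    have "s = {(!) xs ` {(i+t) mod ?n | t. t<m}, UNIV - (!) xs ` {(i+t) mod ?n | t. t<m}}"
      using L unfolding Let_def eq .
    then show ?thesis by (rule that)
  qed
  define Q where "Q = {(i+t) mod ?n | t. t<m}"
  have Qeq: "Q = {(i mod ?n+t) mod ?n | t. t<m}" unfolding Q_def by (simp add: mod_add_left_eq)
  have Qsub: "Q \<subseteq> {..<?n}" unfolding Q_def using n0 by auto
  have sQ: "s = {(!) xs ` Q, UNIV - (!) xs ` Q}" using im unfolding Q_def .
  have ne: "(!) xs ` Q \<noteq> {}" "(!) xs ` Q \<noteq> UNIV" using split_parts[OF sp sQ] by auto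
  have m0: "0 < m" using ne(1) unfolding Q_def by (cases m) auto
  have mn: "m < ?n"
  proof (rule ccontr)
    assume "\<not> m < ?n"
    then have "?n \<le> m" by simp
    then have "Q = {..<?n}" unfolding Q_def by (rule Q_full[OF n0])
    then show False using ne(2) img_all by simp
  qed
  obtain j k where jk: "0<j" "j\<le>k" "k<?n" "Q = {j..k} \<or> {..<?n} - Q = {j..k}"
  proof -
    have "\<exists>j k. 0<j \<and> j\<le>k \<and> k<?n \<and> (Q = {j..k} \<or> {..<?n} - Q = {j..k})"
      using Q_interval[OF mod_less_divisor[OF n0, of i] m0 mn] unfolding Qeq[symmetric] .
    then show ?thesis using that by blast
  qed
  define B where "B = (!) xs ` {j..k}"
  have sB: "s = {B, UNIV - B}"
    using jk(4)
  proof
    assume "Q = {j..k}" then show ?thesis using sQ unfolding B_def by simp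
  next
    assume "{..<?n} - Q = {j..k}"
    then have "B = UNIV - (!) xs ` Q" unfolding B_def using compl_img[OF Qsub] by simp
    then show ?thesis using sQ by auto
  qed
  have cB: "card B = k + 1 - j" unfolding B_def using jk by (subst card_img) auto
  have cc: "2 \<le> card B" "2 \<le> card (UNIV - B)" using nontriv_parts[OF nt sB] by auto
  have c1: "2 \<le> k + 1 - j" using cc(1) cB by simp
  have c2: "2 \<le> ?n - (k + 1 - j)" using cc(2) cB card_compl by simp
  have "j < k" using c1 by simp
  moreover have "(j,k) \<noteq> (1, ?n - 1)" using c2 by auto
  ultimately have "(j,k) \<in> Idx ?n" using jk unfolding Idx_def by simp
  moreover have "s = Fm xs (j,k)" unfolding Fm_def sB B_def by simp
  ultimately show "s \<in> Fm xs ` Idx ?n" by blast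
qed

lemma card_NC: "card (NC xs) = card (Idx (length xs))"
proof -
  have "Fm xs ` Idx (length xs) \<subseteq> NC xs" by (rule image_subsetI, rule Fm_in)
  then have e: "Fm xs ` Idx (length xs) = NC xs" using NC_sub by (rule subset_antisym)
  show ?thesis using card_image[OF Fm_inj] unfolding e .
qed

end


lemma card_Idx: "3 \<le> n \<Longrightarrow> int (card (Idx n)) = int n * (int n - 3) div 2"
proof -
  assume n: "3 \<le> n"
  define J where "J = {(j,k). 0<j \<and> j<k \<and> k<(n::nat)}"
  have fin: "finite J" unfolding J_def by (rule finite_subset[of _ "{..<n} \<times> {..<n}"]) auto
  have mem: "(1, n-1) \<in> J" unfolding J_def using n by auto
  have cI: "card (Idx n) = card J - 1" unfolding Idx_def J_def[symmetric] using fin mem by (simp add: card_Diff_singleton)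
  have h: "2 * card J = (n-1)*(n-2)" unfolding J_def by (rule card_J)
  have cJ: "1 \<le> card J" using fin mem by (metis One_nat_def Suc_leI card_gt_0_iff empty_iff)
  have "int (2 * card J) = int ((n-1)*(n-2))" using h by simp
  then have "2 * int (card J) = (int n - 1) * (int n - 2)" using n by (simp add: of_nat_diff)
  then have "2 * int (card (Idx n)) = int n * (int n - 3)" using cI cJ by (simp add: of_nat_diff algebra_simps)
  then show ?thesis by simp
qed

lemma card_NC_formula:
  assumes "circular_ordering UNIV (xs::'a::finite list)" "3 \<le> CARD('a)"
  shows "int (card (NC xs)) = int CARD('a) * (int CARD('a) - 3) div 2"
  using card_NC[OF assms(1)] len[OF assms(1)] card_Idx[OF assms(2)] by simp

lemma ee_simplex: "(int (card S) - 1) simplex split_cell (S::'a::finite set set set)"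
  unfolding split_cell_def
  by (rule simplex_convex_hull) (simp add: ee_indep card_image[OF inj_on_subset[OF ee_inj]])

lemma cell_char: "split_cell S = {x. (\<forall>i. 0 \<le> x$i) \<and> (\<forall>i. x$i \<noteq> 0 \<longrightarrow> i \<in> S) \<and> sum (\<lambda>i. x$i) S = 1}"
  unfolding split_cell_def by (rule hull_char)

lemma cell_support: "S = {i. \<exists>x\<in>split_cell S. x$i \<noteq> 0}"
proof (intro set_eqI iffI)
  fix i assume "i \<in> S"
  then have "ee i \<in> split_cell S" unfolding split_cell_def by (intro hull_inc) auto
  then show "i \<in> {i. \<exists>x\<in>split_cell S. x$i \<noteq> 0}" by force
next
  fix i assume "i \<in> {i. \<exists>x\<in>split_cell S. x$i \<noteq> 0}"
  then show "i \<in> S" unfolding cell_char by auto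
qed

lemma cell_inj: "inj split_cell"
proof (rule injI)
  fix S T :: "'a set set set" assume eq: "split_cell S = split_cell T"
  have "S = {i. \<exists>x\<in>split_cell S. x$i \<noteq> 0}" by (rule cell_support)
  also have "\<dots> = {i. \<exists>x\<in>split_cell T. x$i \<noteq> 0}" unfolding eq ..
  also have "\<dots> = T" by (rule cell_support[symmetric])
  finally show "S = T" .
qed

lemma simplex_card:
  assumes "k simplex split_cell S"
  shows "k = int (card S) - 1"
  using aff_dim_simplex[OF assms] aff_dim_simplex[OF ee_simplex[of S]] by simp

lemma cell_inter: "split_cell S \<inter> split_cell T = split_cell (S \<inter> T)"
proof (intro set_eqI iffI)
  fix x assume x: "x \<in> split_cell S \<inter> split_cell T"
  then have sup: "\<forall>i. x$i \<noteq> 0 \<longrightarrow> i \<in> S \<inter> T" unfolding cell_char by auto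
  have "sum (\<lambda>i. x$i) S = sum (\<lambda>i. x$i) (S \<inter> T)"
    using sup by (intro sum.mono_neutral_right) auto
  then show "x \<in> split_cell (S \<inter> T)" using x sup unfolding cell_char by auto
next
  fix x assume x: "x \<in> split_cell (S \<inter> T)"
  then have sup: "\<forall>i. x$i \<noteq> 0 \<longrightarrow> i \<in> S \<inter> T" and s1: "sum (\<lambda>i. x$i) (S \<inter> T) = 1" unfolding cell_char by auto
  have "sum (\<lambda>i. x$i) S = sum (\<lambda>i. x$i) (S \<inter> T)"
    using sup by (intro sum.mono_neutral_right) auto
  moreover have "sum (\<lambda>i. x$i) T = sum (\<lambda>i. x$i) (S \<inter> T)"
    using sup by (intro sum.mono_neutral_right) auto
  ultimately show "x \<in> split_cell S \<inter> split_cell T" using x sup s1 unfolding cell_char by auto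
qed

lemma face_cell: "F face_of split_cell S \<longleftrightarrow> (\<exists>T\<subseteq>S. F = split_cell T)"
proof -
  have "F face_of split_cell S \<longleftrightarrow> (\<exists>c. c \<subseteq> ee ` S \<and> F = convex hull c)"
    unfolding split_cell_def by (rule face_of_convex_hull_affine_independent[OF ee_indep])
  also have "\<dots> \<longleftrightarrow> (\<exists>T\<subseteq>S. F = split_cell T)"
  proof
    assume "\<exists>c. c \<subseteq> ee ` S \<and> F = convex hull c"
    then obtain c where c: "c \<subseteq> ee ` S" "F = convex hull c" by blast
    define T where "T = {s\<in>S. ee s \<in> c}"
    have "c = ee ` T" unfolding T_def using c(1) by auto
    then have "F = split_cell T" unfolding split_cell_def using c(2) by simp
    moreover have "T \<subseteq> S" unfolding T_def by simp
    ultimately show "\<exists>T\<subseteq>S. F = split_cell T" by (intro exI[of _ T]) simp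
  next
    assume "\<exists>T\<subseteq>S. F = split_cell T"
    then obtain T where "T \<subseteq> S" "F = split_cell T" by blast
    then have "ee ` T \<subseteq> ee ` S" "F = convex hull (ee ` T)" unfolding split_cell_def by auto
    then show "\<exists>c. c \<subseteq> ee ` S \<and> F = convex hull c" by (intro exI[of _ "ee ` T"]) simp
  qed
  finally show ?thesis .
qed

lemma css_sub: "circular_split_system S \<Longrightarrow> T \<subseteq> S \<Longrightarrow> circular_split_system T"
  unfolding circular_split_system_def by blast

lemma simplicial: "simplicial_complex (network_complex :: (real ^ ('a::finite set set)) set set)"
  unfolding simplicial_complex_def
proof (intro conjI allI impI ballI)
  show "finite (network_complex :: (real ^ ('a::finite set set)) set set)"
    unfolding network_complex_def by simp
next
  fix S :: "(real ^ ('a::finite set set)) set" assume "S \<in> network_complex"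
  then show "\<exists>n. n simplex S" unfolding network_complex_def using ee_simplex by blast
next
  fix F S :: "(real ^ ('a::finite set set)) set" assume "S \<in> network_complex \<and> F face_of S"
  then obtain U where U: "circular_split_system U" "S = split_cell U" "F face_of split_cell U"
    unfolding network_complex_def by auto
  then obtain T where "T \<subseteq> U" "F = split_cell T" using face_cell by blast
  then show "F \<in> network_complex" unfolding network_complex_def using css_sub[OF U(1)] by blast
next
  fix S S' :: "(real ^ ('a::finite set set)) set" assume "S \<in> network_complex \<and> S' \<in> network_complex"
  then obtain U U' where e: "S = split_cell U" "S' = split_cell U'"
    unfolding network_complex_def by auto
  have "split_cell (U \<inter> U') face_of split_cell U" unfolding face_cell by blast
  then show "(S \<inter> S') face_of S" unfolding e cell_inter .
qed


lemma union_eq: "\<Union>(network_complex :: (real ^ ('a::finite set set)) set set) = network_space"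
proof (intro set_eqI iffI)
  fix x :: "real ^ ('a set set)" assume "x \<in> \<Union>network_complex"
  then obtain S where S: "circular_split_system S" "x \<in> split_cell S" unfolding network_complex_def by auto
  obtain xs where xs: "circular_ordering UNIV xs" "\<forall>s\<in>S. circular_wrt UNIV xs s" and nt: "\<forall>s\<in>S. nontrivial_split UNIV s"
    using S(1) unfolding circular_split_system_def by blast
  have x: "\<forall>i. 0 \<le> x$i" "\<forall>i. x$i \<noteq> 0 \<longrightarrow> i \<in> S" "sum (\<lambda>i. x$i) S = 1"
    using S(2) unfolding cell_char by auto
  have "x \<in> chamber_cone xs" unfolding chamber_cone_def using x xs nt by auto
  then have "x \<in> CSN" unfolding CSN_def using xs(1) by blast
  moreover have "sum (\<lambda>i. x$i) S = sum (\<lambda>i. x$i) {s. nontrivial_split UNIV s}"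
    using x nt by (intro sum.mono_neutral_left) auto
  ultimately show "x \<in> network_space" unfolding network_space_def using x by simp
next
  fix x :: "real ^ ('a set set)" assume "x \<in> network_space"
  then have x: "x \<in> CSN" "sum (\<lambda>i. x$i) {s. nontrivial_split UNIV s} = 1" unfolding network_space_def by auto
  then obtain xs where xs: "circular_ordering UNIV xs" "x \<in> chamber_cone xs" unfolding CSN_def by blast
  define S where "S = {s. x$s \<noteq> 0}"
  have c: "\<forall>s. 0 \<le> x $ s" "\<forall>s. x $ s \<noteq> 0 \<longrightarrow> nontrivial_split UNIV s \<and> circular_wrt UNIV xs s"
    using xs(2) unfolding chamber_cone_def by auto
  have "circular_split_system S" unfolding circular_split_system_def S_def using c xs(1) by blast
  moreover have "sum (\<lambda>i. x$i) S = sum (\<lambda>i. x$i) {s. nontrivial_split UNIV s}"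
    unfolding S_def using c by (intro sum.mono_neutral_left) auto
  then have "x \<in> split_cell S" unfolding cell_char S_def using c x by auto
  ultimately show "x \<in> \<Union>network_complex" unfolding network_complex_def by blast
qed

lemma exists_co: "\<exists>xs. circular_ordering (UNIV::'a::finite set) xs"
  unfolding circular_ordering_def using finite_distinct_list[of "UNIV :: 'a set"] by auto

lemma css_NC: "circular_ordering UNIV xs \<Longrightarrow> circular_split_system (NC xs)"
  unfolding circular_split_system_def NC_def by blast

lemma css_bound:
  assumes "circular_split_system (S::'a::finite set set set)" "3 \<le> CARD('a)"
  shows "int (card S) \<le> int CARD('a) * (int CARD('a) - 3) div 2"
proof -
  obtain xs where xs: "circular_ordering UNIV xs" "\<forall>s\<in>S. circular_wrt UNIV xs s" and nt: "\<forall>s\<in>S. nontrivial_split UNIV s"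
    using assms(1) unfolding circular_split_system_def by blast
  have "S \<subseteq> NC xs" unfolding NC_def using xs nt by auto
  then have "card S \<le> card (NC xs)" by (intro card_mono) auto
  then show ?thesis using card_NC_formula[OF xs(1) assms(2)] by linarith
qed

lemma dim_exists:
  assumes "3 \<le> CARD('a::finite)"
  shows "\<exists>\<sigma>\<in>(network_complex :: (real ^ ('a set set)) set set).
          (int CARD('a) * (int CARD('a) - 3) div 2 - 1) simplex \<sigma>"
proof -
  obtain xs :: "'a list" where xs: "circular_ordering UNIV xs" using exists_co by blast
  have "split_cell (NC xs) \<in> network_complex" unfolding network_complex_def using css_NC[OF xs] by blast
  moreover have "(int (card (NC xs)) - 1) simplex split_cell (NC xs)" by (rule ee_simplex)
  ultimately show ?thesis using card_NC_formula[OF xs assms] by auto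
qed

lemma dim_bound:
  assumes "3 \<le> CARD('a::finite)"
  shows "\<forall>\<sigma>\<in>(network_complex :: (real ^ ('a set set)) set set). \<forall>k. k simplex \<sigma> \<longrightarrow>
          k \<le> int CARD('a) * (int CARD('a) - 3) div 2 - 1"
proof (intro ballI allI impI)
  fix \<sigma> :: "(real ^ ('a set set)) set" and k assume "\<sigma> \<in> network_complex" "k simplex \<sigma>"
  then obtain S where S: "circular_split_system S" "\<sigma> = split_cell S" "k simplex split_cell S"
    unfolding network_complex_def by auto
  show "k \<le> int CARD('a) * (int CARD('a) - 3) div 2 - 1"
    using simplex_card[OF S(3)] css_bound[OF S(1) assms] by linarith
qed

lemma bij_part:
  "bij_betw split_cell {S :: 'a::finite set set set. circular_split_system S \<and> int (card S) = k + 1}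
            {\<sigma> \<in> (network_complex :: (real ^ ('a set set)) set set). k simplex \<sigma>}"
proof (rule bij_betw_imageI)
  show "inj_on split_cell {S :: 'a::finite set set set. circular_split_system S \<and> int (card S) = k + 1}"
    using cell_inj by (rule inj_on_subset) simp
next
  show "split_cell ` {S :: 'a::finite set set set. circular_split_system S \<and> int (card S) = k + 1}
      = {\<sigma> \<in> (network_complex :: (real ^ ('a set set)) set set). k simplex \<sigma>}"
  proof (intro set_eqI iffI)
    fix \<sigma> :: "(real ^ ('a set set)) set"
    assume "\<sigma> \<in> split_cell ` {S. circular_split_system S \<and> int (card S) = k + 1}"
    then obtain S where S: "circular_split_system S" "int (card S) = k + 1" "\<sigma> = split_cell S" by auto
    have "(int (card S) - 1) simplex \<sigma>" using S(3) ee_simplex by simp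
    then have "k simplex \<sigma>" using S(2) by simp
    then show "\<sigma> \<in> {\<sigma> \<in> network_complex. k simplex \<sigma>}" unfolding network_complex_def using S by auto
  next
    fix \<sigma> :: "(real ^ ('a set set)) set"
    assume "\<sigma> \<in> {\<sigma> \<in> network_complex. k simplex \<sigma>}"
    then obtain S where S: "circular_split_system S" "\<sigma> = split_cell S" "k simplex split_cell S"
      unfolding network_complex_def by auto
    have "int (card S) = k + 1" using simplex_card[OF S(3)] by simp
    then show "\<sigma> \<in> split_cell ` {S. circular_split_system S \<and> int (card S) = k + 1}" using S by auto
  qed
qed


lemma two_set: "{f t | t. t < (2::nat)} = {f 0, f 1}"
  by (auto simp: numeral_2_eq_2 less_Suc_eq)

lemma pair_NC:
  fixes xs :: "'a::finite list"
  assumes co: "circular_ordering UNIV xs" and n4: "4 \<le> CARD('a)" and p: "p < length xs"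
  shows "{{xs!p, xs!((p+1) mod length xs)}, UNIV - {xs!p, xs!((p+1) mod length xs)}} \<in> NC xs"
proof -
  let ?n = "length xs"
  let ?q = "(p+1) mod ?n"
  define A where "A = {xs!p, xs!?q}"
  have n: "?n = CARD('a)" by (rule len[OF co])
  have q: "?q < ?n" using p by (intro mod_less_divisor) auto
  have pq: "p \<noteq> ?q"
  proof (cases "p + 1 < ?n")
    case True then show ?thesis by simp
  next
    case False then have "p + 1 = ?n" using p by simp
    then show ?thesis using n n4 by simp
  qed
  have dist: "distinct xs" using co unfolding circular_ordering_def by simp
  have ne: "xs!p \<noteq> xs!?q" using pq p q dist by (simp add: nth_eq_iff_index_eq)
  have cA: "card A = 2" unfolding A_def using ne by simp
  have cA': "card (UNIV - A) = CARD('a) - 2" using cA by (simp add: card_Diff_subset)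
  have nt: "nontrivial_split UNIV {A, UNIV - A}" using nontriv_intro[of A] cA cA' n4 by simp
  have eq: "{xs ! ((p + t) mod ?n) | t. t < 2} = A" unfolding two_set A_def using p by simp
  have L: "let A' = {xs ! ((p + t) mod ?n) | t. t < 2} in {A, UNIV - A} = {A', UNIV - A'}"
    unfolding Let_def eq ..
  have "circular_wrt UNIV xs {A, UNIV - A}"
    unfolding circular_wrt_def
    apply (rule conjI)
    using nt unfolding nontrivial_split_def apply blast
    apply (rule exI[of _ p], rule exI[of _ 2])
    by (rule L)
  then show ?thesis using nt unfolding NC_def A_def by simp
qed

definition D :: "'a::finite list \<Rightarrow> (real ^ ('a set set)) set" where
  "D xs = split_cell (NC xs)"

definition vv :: "'a::finite \<Rightarrow> 'a \<Rightarrow> real ^ ('a set set)" where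
  "vv a y = ee {{a,y}, UNIV - {a,y}}"

lemma in_D: "s \<in> NC xs \<Longrightarrow> ee s \<in> D xs"
  unfolding D_def split_cell_def by (intro hull_inc) simp

lemma C1:
  fixes xs :: "'a::finite list"
  assumes co: "circular_ordering UNIV xs" and n4: "4 \<le> CARD('a)"
  shows "\<exists>y. y \<noteq> a \<and> vv a y \<in> D xs"
proof -
  have "a \<in> set xs" using co unfolding circular_ordering_def by simp
  then obtain p where p: "p < length xs" "xs ! p = a" by (auto simp: in_set_conv_nth)
  let ?q = "(p+1) mod length xs"
  have "{{xs!p, xs!?q}, UNIV - {xs!p, xs!?q}} \<in> NC xs" by (rule pair_NC[OF co n4 p(1)])
  then have "vv a (xs!?q) \<in> D xs" unfolding vv_def p(2) by (rule in_D)
  moreover have "xs!?q \<noteq> a"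
  proof
    assume "xs!?q = a"
    then have "{a, xs!?q} = {a}" by simp
    have "{{xs!p, xs!?q}, UNIV - {xs!p, xs!?q}} \<in> NC xs" by (rule pair_NC[OF co n4 p(1)])
    then have "nontrivial_split UNIV {{a}, UNIV - {a}}" unfolding NC_def using \<open>xs!?q = a\<close> p(2) by simp
    then show False using nontriv_parts[of "{{a}, UNIV - {a}}" "{a}"] by simp
  qed
  ultimately show ?thesis by blast
qed

lemma C2:
  fixes a b y :: "'a::finite"
  assumes n4: "4 \<le> CARD('a)" and d: "a \<noteq> b" "y \<noteq> a" "y \<noteq> b"
  shows "\<exists>zs. circular_ordering UNIV zs \<and> vv a b \<in> D zs \<and> vv a y \<in> D zs"
proof -
  obtain rest where r: "set rest = UNIV - {a,b,y}" "distinct rest"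
    using finite_distinct_list[of "UNIV - {a,b,y}"] by auto
  define zs where "zs = [b,a,y] @ rest"
  have co: "circular_ordering UNIV zs" unfolding circular_ordering_def zs_def using r d by auto
  have n: "length zs = CARD('a)" by (rule len[OF co])
  have "{{zs!0, zs!((0+1) mod length zs)}, UNIV - {zs!0, zs!((0+1) mod length zs)}} \<in> NC zs"
    by (rule pair_NC[OF co n4]) (simp add: zs_def)
  moreover have "(0+1) mod length zs = 1" using n n4 by simp
  ultimately have "{{b, a}, UNIV - {b,a}} \<in> NC zs" by (simp add: zs_def)
  then have 1: "vv a b \<in> D zs" unfolding vv_def by (simp add: insert_commute in_D)
  have "{{zs!1, zs!((1+1) mod length zs)}, UNIV - {zs!1, zs!((1+1) mod length zs)}} \<in> NC zs"
    by (rule pair_NC[OF co n4]) (simp add: zs_def)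
  moreover have "(1+1) mod length zs = 2" using n n4 by simp
  ultimately have "{{a, y}, UNIV - {a,y}} \<in> NC zs" by (simp add: zs_def)
  then have 2: "vv a y \<in> D zs" unfolding vv_def by (rule in_D)
  show ?thesis using co 1 2 by blast
qed

lemma D_sub: "circular_ordering UNIV xs \<Longrightarrow> D xs \<subseteq> network_space"
  unfolding D_def using union_eq css_NC unfolding network_complex_def by blast

lemma D_conn: "connected (D xs)"
  unfolding D_def split_cell_def by (intro convex_connected convex_convex_hull)

lemma ns_D: "(network_space :: (real ^ ('a::finite set set)) set) = \<Union>(D ` {xs. circular_ordering UNIV xs})"
proof (rule equalityI)
  show "(network_space :: (real ^ ('a::finite set set)) set) \<subseteq> \<Union>(D ` {xs. circular_ordering UNIV xs})"
  proof
    fix x assume "x \<in> (network_space :: (real ^ ('a::finite set set)) set)"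
    then obtain S where S: "circular_split_system S" "x \<in> split_cell S"
      using union_eq unfolding network_complex_def by blast
    then obtain xs where xs: "circular_ordering UNIV xs" "S \<subseteq> NC xs"
      unfolding circular_split_system_def NC_def by blast
    have "split_cell S \<subseteq> D xs" unfolding D_def split_cell_def using xs(2) by (intro hull_mono image_mono)
    then show "x \<in> \<Union>(D ` {xs. circular_ordering UNIV xs})" using S xs by blast
  qed
next
  show "\<Union>(D ` {xs. circular_ordering UNIV xs}) \<subseteq> (network_space :: (real ^ ('a::finite set set)) set)"
    using D_sub by blast
qed

lemma connected_ns:
  assumes n4: "4 \<le> CARD('a::finite)"
  shows "connected (network_space :: (real ^ ('a set set)) set)"
proof -
  obtain a :: 'a where True by blast
  have "UNIV \<noteq> {a}"
  proof
    assume h: "UNIV = {a}"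
    have "CARD('a) = card {a}" by (simp only: h)
    then have "CARD('a) = 1" by simp
    with n4 show False by simp
  qed
  have "\<exists>b. a \<noteq> b"
  proof (rule ccontr)
    assume "\<not> (\<exists>b. a \<noteq> b)"
    then have "UNIV = {a}" by auto
    with \<open>UNIV \<noteq> {a}\<close> show False by simp
  qed
  then obtain b where ab: "a \<noteq> b" by blast
  define P where "P = {(xs,zs). circular_ordering UNIV xs \<and> circular_ordering UNIV zs
                         \<and> vv a b \<in> D zs \<and> D xs \<inter> D zs \<noteq> {}}"
  define F where "F = (\<lambda>(xs,zs). D xs \<union> D zs) ` P"
  have memF: "D xs \<union> D zs \<in> F" if "(xs,zs) \<in> P" for xs zs
    unfolding F_def by (rule image_eqI[of _ _ "(xs,zs)"]) (use that in auto)
  have "\<Union>F = network_space"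
  proof
    show "\<Union>F \<subseteq> network_space"
    proof
      fix x :: "real ^ ('a set set)" assume "x \<in> \<Union>F"
      then obtain xs zs where "(xs,zs) \<in> P" "x \<in> D xs \<union> D zs" unfolding F_def by auto
      then show "x \<in> network_space" unfolding P_def using D_sub by blast
    qed
  next
    show "network_space \<subseteq> \<Union>F"
    proof
      fix x :: "real ^ ('a set set)" assume "x \<in> network_space"
      then obtain xs where xs: "circular_ordering UNIV xs" "x \<in> D xs" unfolding ns_D by blast
      obtain y where y: "y \<noteq> a" "vv a y \<in> D xs" using C1[OF xs(1) n4] by blast
      show "x \<in> \<Union>F"
      proof (cases "y = b")
        case True
        then have "(xs,xs) \<in> P" unfolding P_def using xs y by auto
        then have "D xs \<union> D xs \<in> F" by (rule memF)
        then show ?thesis using xs by blast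
      next
        case False
        obtain zs where zs: "circular_ordering UNIV zs" "vv a b \<in> D zs" "vv a y \<in> D zs"
          using C2[OF n4 ab y(1) False] by blast
        then have "(xs,zs) \<in> P" unfolding P_def using xs y by auto
        then have "D xs \<union> D zs \<in> F" by (rule memF)
        then show ?thesis using xs by blast
      qed
    qed
  qed
  moreover have "connected (\<Union>F)"
  proof (rule connected_Union)
    fix s assume "s \<in> F"
    then obtain xs zs where "(xs,zs) \<in> P" "s = D xs \<union> D zs" unfolding F_def by auto
    then show "connected s" unfolding P_def using D_conn connected_Un by auto
  next
    have "vv a b \<in> s" if "s \<in> F" for s
    proof -
      from that obtain xs zs where "(xs,zs) \<in> P" "s = D xs \<union> D zs" unfolding F_def by auto
      then show ?thesis unfolding P_def by auto
    qed
    then show "\<Inter>F \<noteq> {}" by blast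
  qed
  ultimately show ?thesis by simp
qed


theorem proposition5:
  assumes "CARD('a::finite) \<ge> 4"
  shows "simplicial_complex (network_complex :: (real ^ ('a set set)) set set)
    \<and> \<Union>(network_complex :: (real ^ ('a set set)) set set) = network_space
    \<and> connected (network_space :: (real ^ ('a set set)) set)
    \<and> (\<exists>\<sigma>\<in>(network_complex :: (real ^ ('a set set)) set set).
          (int CARD('a) * (int CARD('a) - 3) div 2 - 1) simplex \<sigma>)
    \<and> (\<forall>\<sigma>\<in>(network_complex :: (real ^ ('a set set)) set set). \<forall>k. k simplex \<sigma> \<longrightarrow>
          k \<le> int CARD('a) * (int CARD('a) - 3) div 2 - 1)
    \<and> (\<forall>k::int. k \<ge> -1 \<longrightarrow>
          bij_betw split_cell {S :: 'a set set set. circular_split_system S \<and> int (card S) = k + 1}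
            {\<sigma> \<in> (network_complex :: (real ^ ('a set set)) set set). k simplex \<sigma>})"
proof -
  have n3: "3 \<le> CARD('a)" using assms by simp
  show ?thesis
  proof (intro conjI allI impI)
    show "simplicial_complex (network_complex :: (real ^ ('a set set)) set set)" by (rule simplicial)
    show "\<Union>(network_complex :: (real ^ ('a set set)) set set) = network_space" by (rule union_eq)
    show "connected (network_space :: (real ^ ('a set set)) set)" by (rule connected_ns[OF assms])
    show "\<exists>\<sigma>\<in>(network_complex :: (real ^ ('a set set)) set set).
          (int CARD('a) * (int CARD('a) - 3) div 2 - 1) simplex \<sigma>" by (rule dim_exists[OF n3])
    show "\<forall>\<sigma>\<in>(network_complex :: (real ^ ('a set set)) set set). \<forall>k. k simplex \<sigma> \<longrightarrow>
          k \<le> int CARD('a) * (int CARD('a) - 3) div 2 - 1" by (rule dim_bound[OF n3])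
    fix k :: int
    show "bij_betw split_cell {S :: 'a set set set. circular_split_system S \<and> int (card S) = k + 1}
            {\<sigma> \<in> (network_complex :: (real ^ ('a set set)) set set). k simplex \<sigma>}" by (rule bij_part)
  qed
qed

end
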